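(* Let $A=(a_{ij})_{i,j=1}^n$ be an $n\times n$ matrix all of whose entries are $0$ or $1$, and such that $a_{ij}=1$ whenever $1\le j\le i\le n$. Then $$\det A=\prod_{i=2}^n(1-a_{i-1,i})=\begin{cases}1,& a_{i-1,i}=0 \text{ for all } 2\le i\le n,\\ 0,&\text{otherwise.}\end{cases}$$ *)

theory Defs
  imports "Jordan_Normal_Form.Determinant"
begin

end

theory Submission
  imports Defs
begin

theorem lemma3p1:
  fixes A :: "real mat" and n :: nat
  assumes "A \<in> carrier_mat n n"
    and "\<And>i j. i < n \<Longrightarrow> j < n \<Longrightarrow> A $$ (i, j) = 0 \<or> A $$ (i, j) = 1"
    and "\<And>i j. j \<le> i \<Longrightarrow> i < n \<Longrightarrow> A $$ (i, j) = 1"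
  shows "det A = (\<Prod>i\<in>{1..<n}. 1 - A $$ (i - 1, i))
    \<and> det A = (if (\<forall>i\<in>{1..<n}. A $$ (i - 1, i) = 0) then 1 else 0)"
proof -
  note A = assms(1)
  define L :: "real mat" where "L = mat n n (\<lambda>(i,j). (if i = j then 1 else 0) - (if 0 < i \<and> j = i - 1 then 1 else 0))"
  have L: "L \<in> carrier_mat n n" unfolding L_def by simp
  have detL: "det L = 1"
  proof -
    have "det L = prod_list (diag_mat L)"
      by (rule det_lower_triangular[OF _ L]) (auto simp: L_def)
    also have "\<dots> = 1" unfolding prod_list_diag_prod using L
      by (auto simp: L_def intro!: prod.neutral)
    finally show ?thesis .
  qed
  define B where "B = L * A"
  have B: "B \<in> carrier_mat n n" unfolding B_def using L A by auto
  have Bij: "B $$ (i,j) = A $$ (i,j) - (if 0 < i then A $$ (i - 1, j) else 0)"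
    if "i < n" "j < n" for i j
  proof -
    have "B $$ (i,j) = (\<Sum>k\<in>{0..<n}. ((if i = k then 1 else 0) - (if 0 < i \<and> k = i - 1 then 1 else 0)) * A $$ (k,j))"
      unfolding B_def using that L A by (auto simp: scalar_prod_def L_def intro!: sum.cong)
    also have "\<dots> = (\<Sum>k\<in>{0..<n}. (if i = k then A $$ (k,j) else 0)) - (\<Sum>k\<in>{0..<n}. (if 0 < i \<and> k = i - 1 then A $$ (k,j) else 0))"
      unfolding sum_subtractf[symmetric] by (rule sum.cong) auto
    also have "\<dots> = A $$ (i,j) - (if 0 < i then A $$ (i - 1, j) else 0)"
      using that by (auto simp: sum.delta)
    finally show ?thesis .
  qed
  have detB: "det B = det A" unfolding B_def using det_mult[OF L A] detL by simp
  have ut: "upper_triangular B"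
    unfolding upper_triangular_def using B
    by (auto simp: Bij assms(3))
  have "det B = (\<Prod>i\<in>{0..<n}. B $$ (i,i))"
    using det_upper_triangular[OF ut B] B by (simp add: prod_list_diag_prod)
  also have "\<dots> = (\<Prod>i\<in>{1..<n}. 1 - A $$ (i - 1, i))"
  proof (cases n)
    case 0 then show ?thesis by simp
  next
    case (Suc m)
    have "{0..<n} = insert 0 {1..<n}" using Suc by auto
    then have "(\<Prod>i\<in>{0..<n}. B $$ (i,i)) = B $$ (0,0) * (\<Prod>i\<in>{1..<n}. B $$ (i,i))" by simp
    also have "B $$ (0,0) = 1" using Suc by (simp add: Bij assms(3))
    also have "(\<Prod>i\<in>{1..<n}. B $$ (i,i)) = (\<Prod>i\<in>{1..<n}. 1 - A $$ (i - 1, i))"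
      by (rule prod.cong) (auto simp: Bij assms(3))
    finally show ?thesis by simp
  qed
  finally have 1: "det A = (\<Prod>i\<in>{1..<n}. 1 - A $$ (i - 1, i))" using detB by simp
  show ?thesis
  proof (cases "\<forall>i\<in>{1..<n}. A $$ (i - 1, i) = 0")
    case True then show ?thesis using 1 by simp
  next
    case False
    then obtain i where i: "i \<in> {1..<n}" "A $$ (i - 1, i) \<noteq> 0" by auto
    then have "A $$ (i - 1, i) = 1" using assms(2)[of "i - 1" i] by auto
    then have "(\<Prod>i\<in>{1..<n}. 1 - A $$ (i - 1, i)) = 0"
      using i by (intro prod_zero) auto
    then show ?thesis using 1 False by simp
  qed
qed

end
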